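(* Let $(G,\preceq)$ be a left-ordered group. Let $S^+$ be the set of elements $h\succ id$ such that $h\preceq w$ for every crossing $(f,g,u,v,w)$ of the left-translation action of $G$ on $(G,\preceq)$ with $id\preceq u$; let $S^-$ be the set of elements $h\prec id$ such that $w\preceq h$ for every such crossing with $v\preceq id$; and let $S=\{id\}\cup S^+\cup S^-$. Then the Conradian soul of $(G,\preceq)$ coincides with $S$.
   Context: A left-ordering is a total order invariant under left multiplication; it is Conradian if for all $f\succ id$, $g\succ id$ there is $n\in\mathbb{N}$ with $fg^n\succ g$. A subset $C$ is convex if $f_1\prec h\prec f_2$ with $f_1,f_2\in C$ implies $h\in C$. The Conradian soul $C_\preceq(G)$ is the maximal (for inclusion) $\preceq$-convex subgroup on which the restriction of $\preceq$ is Conradian. A crossing for the left-translation action is a 5-tuple $(f,g,u,v,w)$ of elements of $G$ with: $u\prec w\prec v$; $g^nu\prec v$ and $f^nv\succ u$ for all $n\in\mathbb{N}$; and $f^Nv\prec w\prec g^Mu$ for some $M,N\in\mathbb{N}$. *)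

theory Defs
  imports Main
begin

text \<open>Groups are written additively via the type class group_add (which does NOT
  assume commutativity): the product f g is f + g, the identity is 0, and
  g^n u is the n-fold left translation of u by g.\<close>

definition gpow_act :: "'a::group_add \<Rightarrow> nat \<Rightarrow> 'a \<Rightarrow> 'a" where
  "gpow_act g n u = ((\<lambda>x. g + x) ^^ n) u"

definition left_ordering :: "('a::group_add \<Rightarrow> 'a \<Rightarrow> bool) \<Rightarrow> bool" where
  "left_ordering le \<longleftrightarrow>
     (\<forall>x. le x x) \<and>
     (\<forall>x y. le x y \<and> le y x \<longrightarrow> x = y) \<and>
     (\<forall>x y z. le x y \<and> le y z \<longrightarrow> le x z) \<and>
     (\<forall>x y. le x y \<or> le y x) \<and>
     (\<forall>x y z. le x y \<longrightarrow> le (z + x) (z + y))"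

definition strict :: "('a \<Rightarrow> 'a \<Rightarrow> bool) \<Rightarrow> 'a \<Rightarrow> 'a \<Rightarrow> bool" where
  "strict le x y \<longleftrightarrow> le x y \<and> x \<noteq> y"

definition subgroup_of :: "'a::group_add set \<Rightarrow> bool" where
  "subgroup_of H \<longleftrightarrow> 0 \<in> H \<and> (\<forall>x\<in>H. \<forall>y\<in>H. x + y \<in> H) \<and> (\<forall>x\<in>H. - x \<in> H)"

definition convex_set :: "('a \<Rightarrow> 'a \<Rightarrow> bool) \<Rightarrow> 'a set \<Rightarrow> bool" where
  "convex_set le C \<longleftrightarrow>
     (\<forall>f1\<in>C. \<forall>f2\<in>C. \<forall>h. strict le f1 h \<and> strict le h f2 \<longrightarrow> h \<in> C)"

definition conradian_on :: "('a::group_add \<Rightarrow> 'a \<Rightarrow> bool) \<Rightarrow> 'a set \<Rightarrow> bool" where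
  "conradian_on le C \<longleftrightarrow>
     (\<forall>f\<in>C. \<forall>g\<in>C. strict le 0 f \<and> strict le 0 g \<longrightarrow>
        (\<exists>n::nat. strict le g (f + gpow_act g n 0)))"

definition conradian_soul :: "('a::group_add \<Rightarrow> 'a \<Rightarrow> bool) \<Rightarrow> 'a set" where
  "conradian_soul le =
     (THE C. subgroup_of C \<and> convex_set le C \<and> conradian_on le C \<and>
        (\<forall>D. subgroup_of D \<and> convex_set le D \<and> conradian_on le D \<and> C \<subseteq> D \<longrightarrow> D = C))"

definition crossing :: "('a::group_add \<Rightarrow> 'a \<Rightarrow> bool) \<Rightarrow> 'a \<Rightarrow> 'a \<Rightarrow> 'a \<Rightarrow> 'a \<Rightarrow> 'a \<Rightarrow> bool" where
  "crossing le f g u v w \<longleftrightarrow>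
     strict le u w \<and> strict le w v \<and>
     (\<forall>n::nat. strict le (gpow_act g n u) v \<and> strict le u (gpow_act f n v)) \<and>
     (\<exists>M N::nat. strict le (gpow_act f N v) w \<and> strict le w (gpow_act g M u))"

end

theory Submission
  imports Defs
begin



lemma gpow_0[simp]: "gpow_act g 0 x = x" by (simp add: gpow_act_def)
lemma gpow_Suc[simp]: "gpow_act g (Suc n) x = g + gpow_act g n x" by (simp add: gpow_act_def)
lemma gpow_add0: "gpow_act g n x = gpow_act g n 0 + x"
  by (induct n) (simp_all add: add.assoc[symmetric])
lemma gpow_Suc_right: "gpow_act g (Suc n) x = gpow_act g n (g + x)"
  by (simp add: gpow_act_def funpow_Suc_right del: funpow.simps)
lemma gpow_plus: "gpow_act g (m + n) x = gpow_act g m (gpow_act g n x)"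
  by (simp add: gpow_act_def funpow_add)
lemma gpow_mult: "gpow_act (gpow_act g k 0) n x = gpow_act g (k*n) x"
proof (induct n arbitrary: x)
  case 0 then show ?case by simp
next
  case (Suc n)
  have "gpow_act (gpow_act g k 0) (Suc n) x = gpow_act g k 0 + gpow_act g (k*n) x" using Suc by simp
  also have "\<dots> = gpow_act g k (gpow_act g (k*n) x)" by (metis gpow_add0)
  also have "\<dots> = gpow_act g (k * Suc n) x" by (simp add: gpow_plus)
  finally show ?case .
qed
lemma gpow_conj: "gpow_act (z + g - z) n (z + x) = z + gpow_act g n x"
  by (induct n) (simp_all add: add.assoc[symmetric])
lemma gpow_1: "gpow_act g 1 x = g + x" by simp


lemma crossingI:
  assumes "strict le u w" "strict le w v" "\<And>n. strict le (gpow_act g n u) v"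
    "\<And>n. strict le u (gpow_act f n v)" "strict le (gpow_act f N v) w" "strict le w (gpow_act g M u)"
  shows "crossing le f g u v w"
  using assms unfolding crossing_def by blast

lemma crossingE:
  assumes "crossing le f g u v w"
  obtains M N where "strict le u w" "strict le w v" "\<And>n. strict le (gpow_act g n u) v"
    "\<And>n. strict le u (gpow_act f n v)" "strict le (gpow_act f N v) w" "strict le w (gpow_act g M u)"
  using assms unfolding crossing_def by blast

locale lord =
  fixes le :: "'a::group_add \<Rightarrow> 'a \<Rightarrow> bool"
  assumes LO: "left_ordering le"
begin

lemma refl: "le x x" using LO unfolding left_ordering_def by blast
lemma antisym: "le x y \<Longrightarrow> le y x \<Longrightarrow> x = y" using LO unfolding left_ordering_def by blast
lemma trans: "le x y \<Longrightarrow> le y z \<Longrightarrow> le x z" using LO unfolding left_ordering_def by blast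
lemma total: "le x y \<or> le y x" using LO unfolding left_ordering_def by blast
lemma linv: "le x y \<Longrightarrow> le (z + x) (z + y)" using LO unfolding left_ordering_def by blast
lemma linv_iff: "le (z + x) (z + y) \<longleftrightarrow> le x y"
  using linv[of "z + x" "z + y" "-z"] linv[of x y z] by (auto simp: add.assoc[symmetric])
lemma lt_iff: "strict le x y \<longleftrightarrow> \<not> le y x"
  unfolding strict_def using antisym total refl by blast
lemma slinv_iff: "strict le (z + x) (z + y) \<longleftrightarrow> strict le x y"
  by (simp add: lt_iff linv_iff)
lemma slinv: "strict le x y \<Longrightarrow> strict le (z + x) (z + y)" by (simp add: slinv_iff)
lemma lt_le: "strict le x y \<Longrightarrow> le x y" by (simp add: strict_def)
lemma lt_trans: "strict le x y \<Longrightarrow> strict le y z \<Longrightarrow> strict le x z"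
  by (meson lt_iff trans lt_le)
lemma lt_le_trans: "strict le x y \<Longrightarrow> le y z \<Longrightarrow> strict le x z"
  by (meson lt_iff trans)
lemma le_lt_trans: "le x y \<Longrightarrow> strict le y z \<Longrightarrow> strict le x z"
  by (meson lt_iff trans)
lemma lt_irrefl: "\<not> strict le x x" by (simp add: strict_def)
lemma lt_asym: "strict le x y \<Longrightarrow> \<not> le y x" by (simp add: lt_iff)
lemma pos_add: "strict le 0 a \<Longrightarrow> strict le 0 b \<Longrightarrow> strict le 0 (a + b)"
  using slinv[of 0 b a] lt_trans by fastforce
lemma neg_pos: "strict le x 0 \<longleftrightarrow> strict le 0 (- x)"
  using slinv_iff[of "-x" x 0] by simp
lemma pos_neg: "strict le 0 x \<longleftrightarrow> strict le (- x) 0"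
  using slinv_iff[of "-x" 0 x] by simp
lemma cases3: "x = 0 \<or> strict le 0 x \<or> strict le x 0"
  using total unfolding strict_def by blast

lemma gmono: "le x y \<Longrightarrow> le (gpow_act g n x) (gpow_act g n y)"
  by (metis gpow_add0 linv)
lemma gsmono: "strict le x y \<Longrightarrow> strict le (gpow_act g n x) (gpow_act g n y)"
  by (metis gpow_add0 slinv)

lemma incr: assumes "strict le x (g + x)" "m < n"
  shows "strict le (gpow_act g m x) (gpow_act g n x)"
  using assms(2)
proof (induct n)
  case 0 then show ?case by simp
next
  case (Suc n)
  have st: "strict le (gpow_act g n x) (gpow_act g (Suc n) x)"
    unfolding gpow_Suc_right[of g n x] by (rule gsmono[OF assms(1)])
  show ?case
  proof (cases "m = n")
    case True then show ?thesis using st by simp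
  next
    case False then have "m < n" using Suc by simp
    then show ?thesis using Suc st lt_trans by blast
  qed
qed

lemma incr_le: assumes "strict le x (g + x)" "m \<le> n"
  shows "le (gpow_act g m x) (gpow_act g n x)"
  using incr[OF assms(1)] assms(2) refl lt_le by (cases "m = n") auto

lemma decr: assumes "strict le (g + x) x" "m < n"
  shows "strict le (gpow_act g n x) (gpow_act g m x)"
  using assms(2)
proof (induct n)
  case 0 then show ?case by simp
next
  case (Suc n)
  have st: "strict le (gpow_act g (Suc n) x) (gpow_act g n x)"
    unfolding gpow_Suc_right[of g n x] by (rule gsmono[OF assms(1)])
  show ?case
  proof (cases "m = n")
    case True then show ?thesis using st by simp
  next
    case False then have "m < n" using Suc by simp
    then show ?thesis using Suc st lt_trans by blast
  qed
qed

lemma decr_le: assumes "strict le (g + x) x" "m \<le> n"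
  shows "le (gpow_act g n x) (gpow_act g m x)"
  using decr[OF assms(1)] assms(2) refl lt_le by (cases "m = n") auto

lemma nonincr: "le (g + x) x \<Longrightarrow> le (gpow_act g n x) x"
proof (induct n)
  case 0 then show ?case by (simp add: refl)
next
  case (Suc n)
  have "le (gpow_act g (Suc n) x) (gpow_act g n x)"
    unfolding gpow_Suc_right[of g n x] by (rule gmono[OF Suc(2)])
  then show ?case using Suc trans by blast
qed

lemma nondecr: "le x (g + x) \<Longrightarrow> le x (gpow_act g n x)"
proof (induct n)
  case 0 then show ?case by (simp add: refl)
next
  case (Suc n)
  have "le (gpow_act g n x) (gpow_act g (Suc n) x)"
    unfolding gpow_Suc_right[of g n x] by (rule gmono[OF Suc(2)])
  then show ?case using Suc trans by blast
qed

end


context lord begin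

lemma cr_g_up: assumes "crossing le f g u v w" shows "strict le u (g + u)"
proof -
  obtain M N where c: "strict le u w" "strict le w (gpow_act g M u)"
    using crossingE[OF assms] by metis
  show ?thesis
  proof (rule ccontr)
    assume "\<not> ?thesis"
    then have "le (g + u) u" using lt_iff by blast
    then have "le (gpow_act g M u) u" by (rule nonincr)
    then show False using c lt_trans lt_le_trans lt_irrefl by blast
  qed
qed

lemma cr_f_down: assumes "crossing le f g u v w" shows "strict le (f + v) v"
proof -
  obtain M N where c: "strict le w v" "strict le (gpow_act f N v) w"
    using crossingE[OF assms] by metis
  show ?thesis
  proof (rule ccontr)
    assume "\<not> ?thesis"
    then have "le v (f + v)" using lt_iff by blast
    then have "le v (gpow_act f N v)" by (rule nondecr)
    then show False using c lt_trans le_lt_trans lt_irrefl by blast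
  qed
qed

lemma lower_w: assumes c: "crossing le f g u v w" and N: "strict le (gpow_act f N v) w" and n: "N \<le> n"
  shows "crossing le f g u v (gpow_act f n v)"
proof -
  obtain M N0 where c0: "strict le u w" "strict le w v" "\<And>n. strict le (gpow_act g n u) v"
    "\<And>n. strict le u (gpow_act f n v)" "strict le w (gpow_act g M u)"
    using crossingE[OF c] by metis
  have d: "strict le (f + v) v" by (rule cr_f_down[OF c])
  have "N \<noteq> 0" using N c0(2) lt_trans lt_irrefl by (metis gpow_0)
  then have "strict le (gpow_act f n v) v" using decr[OF d, of 0 n] n by simp
  moreover have "strict le (gpow_act f (Suc n) v) (gpow_act f n v)" using decr[OF d, of n "Suc n"] by simp
  moreover have "strict le (gpow_act f n v) (gpow_act g M u)"
    using decr_le[OF d n] N c0(5) le_lt_trans lt_trans by blast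
  ultimately show ?thesis using c0 by (intro crossingI[where N="Suc n" and M=M]) auto
qed

lemma raise_u: assumes c: "crossing le f g u v w" and ux: "le u x" and xw: "strict le x w"
  and xf: "\<And>n. strict le x (gpow_act f n v)"
  shows "crossing le f g x v w"
proof -
  obtain M N where c0: "strict le u w" "strict le w v" "\<And>n. strict le (gpow_act g n u) v"
    "\<And>n. strict le u (gpow_act f n v)" "strict le (gpow_act f N v) w" "strict le w (gpow_act g M u)"
    using crossingE[OF c] by metis
  have "\<And>n. strict le (gpow_act g n x) v"
  proof -
    fix n
    have "strict le (gpow_act g n x) (gpow_act g n (gpow_act g M u))"
      using gsmono xw c0(6) lt_trans by blast
    then show "strict le (gpow_act g n x) v" using c0(3)[of "n + M"] lt_trans by (simp add: gpow_plus)
  qed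
  moreover have "strict le w (gpow_act g M x)" using c0(6) gmono[OF ux] lt_le_trans by blast
  ultimately show ?thesis using c0 xw xf by (intro crossingI) auto
qed

lemma lower_v: assumes c: "crossing le f g u v w" and wy: "strict le w y" and yv: "le y v"
  and yg: "\<And>n. strict le (gpow_act g n u) y"
  shows "crossing le f g u y w"
proof -
  obtain M N where c0: "strict le u w" "strict le w v" "\<And>n. strict le (gpow_act g n u) v"
    "\<And>n. strict le u (gpow_act f n v)" "strict le (gpow_act f N v) w" "strict le w (gpow_act g M u)"
    using crossingE[OF c] by metis
  have "\<And>n. strict le u (gpow_act f n y)"
  proof -
    fix n
    have "strict le (gpow_act f n (gpow_act f N v)) (gpow_act f n y)"
      using gsmono c0(5) wy lt_trans by blast
    then show "strict le u (gpow_act f n y)" using c0(4)[of "n + N"] lt_trans by (simp add: gpow_plus)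
  qed
  moreover have "strict le (gpow_act f N y) w" using c0(5) gmono[OF yv] le_lt_trans by blast
  ultimately show ?thesis using c0 wy yg by (intro crossingI) auto
qed

lemma translate: assumes c: "crossing le f g u v w"
  shows "crossing le (z + f - z) (z + g - z) (z + u) (z + v) (z + w)"
proof -
  obtain M N where c0: "strict le u w" "strict le w v" "\<And>n. strict le (gpow_act g n u) v"
    "\<And>n. strict le u (gpow_act f n v)" "strict le (gpow_act f N v) w" "strict le w (gpow_act g M u)"
    using crossingE[OF c] by metis
  show ?thesis
    by (rule crossingI[where N=N and M=M]) (simp_all add: gpow_conj slinv_iff c0)
qed

lemma power: assumes c: "crossing le f g u v w"
  obtains F G where "crossing le F G u v w" "strict le (F + v) w" "strict le w (G + u)"
proof -
  obtain M N where c0: "strict le u w" "strict le w v" "\<And>n. strict le (gpow_act g n u) v"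
    "\<And>n. strict le u (gpow_act f n v)" "strict le (gpow_act f N v) w" "strict le w (gpow_act g M u)"
    using crossingE[OF c] by metis
  let ?F = "gpow_act f N 0" and ?G = "gpow_act g M 0"
  have e1: "?F + v = gpow_act f N v" "?G + u = gpow_act g M u" by (metis gpow_add0)+
  have "crossing le ?F ?G u v w"
    by (rule crossingI[where N=1 and M=1]) (simp_all add: gpow_mult c0 e1)
  then show ?thesis using that e1 c0 by simp
qed

end


context lord begin

lemma pospow: "strict le 0 a \<Longrightarrow> strict le 0 b \<Longrightarrow> strict le 0 (gpow_act a n b)"
proof (induct n)
  case 0 then show ?case by simp
next
  case (Suc n)
  have "strict le (a + 0) (a + gpow_act a n b)" using Suc slinv by blast
  then show ?case using Suc(2) lt_trans by simp
qed

lemma pair: assumes a: "strict le 0 a" and b: "strict le 0 b"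
  and ab: "\<And>n. strict le (a + gpow_act b n 0) b"
  shows "crossing le a (a + b - a) a b (a + b)"
proof -
  have orb: "gpow_act (a + b - a) n a = a + gpow_act b n 0" for n
    using gpow_conj[of a b n 0] by simp
  have 1: "strict le a (a + b)" using slinv[OF b, of a] by simp
  have 2: "strict le (a + b) b" using ab[of 1] by simp
  have 3: "strict le a b" using ab[of 0] by simp
  have 4: "strict le a (gpow_act a n b)" for n
  proof (cases n)
    case 0 then show ?thesis using 3 by simp
  next
    case (Suc k)
    have "strict le (a + 0) (a + gpow_act a k b)" using slinv pospow[OF a b] by blast
    then show ?thesis using Suc by simp
  qed
  have 5: "strict le (gpow_act a (Suc (Suc 0)) b) (a + b)" using slinv[OF 2, of a] by simp
  have 6: "strict le (a + b) (gpow_act (a + b - a) (Suc (Suc 0)) a)"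
  proof -
    have "strict le (b + 0) (b + b)" using slinv[OF b, of b] .
    then have "strict le (a + (b + 0)) (a + (b + b))" using slinv by blast
    then show ?thesis unfolding orb by simp
  qed
  show ?thesis
    by (rule crossingI[OF 1 2 _ 4 5 6]) (simp add: orb ab)
qed

lemma posA: assumes c: "crossing le F G 0 v w" and fv: "strict le (F + v) w" and wg: "strict le w G"
  shows "strict le 0 (F + G)"
proof (rule ccontr)
  assume "\<not> ?thesis"
  then have "le (F + G) 0" using lt_iff by blast
  then have "le (-F + (F + G)) (-F + 0)" using linv by blast
  then have "le G (-F)" by (simp add: add.assoc[symmetric])
  then have "strict le (F + v) (-F)" using fv wg lt_trans lt_le_trans by blast
  then have "strict le (F + (F + v)) (F + -F)" using slinv by blast
  moreover obtain M N where "\<And>n. strict le 0 (gpow_act F n v)" using crossingE[OF c] by metis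
  then have "strict le 0 (F + (F + v))" by (metis gpow_Suc gpow_0)
  ultimately have "strict le 0 (F + -F)" using lt_trans by blast
  then show False using lt_irrefl by simp
qed

lemma viol: assumes c: "crossing le F G 0 v w"
  shows "strict le (F + G + gpow_act G n 0) (F + v)"
proof -
  obtain M N where "\<And>n. strict le (gpow_act G n 0) v" using crossingE[OF c] by metis
  then have "strict le (F + gpow_act G (Suc n) 0) (F + v)" using slinv by blast
  then show ?thesis by (simp add: add.assoc)
qed

lemma conr_nocross:
  assumes sub: "subgroup_of D" and cv: "convex_set le D" and cr: "conradian_on le D"
    and hD: "h \<in> D" and c: "crossing le f g u v w" and u0: "le 0 u" and wh: "strict le w h"
  shows False
proof -
  have D0: "0 \<in> D" and Dadd: "\<And>x y. x \<in> D \<Longrightarrow> y \<in> D \<Longrightarrow> x + y \<in> D"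
    and Dneg: "\<And>x. x \<in> D \<Longrightarrow> -x \<in> D" using sub unfolding subgroup_of_def by auto
  have Dcv: "\<And>a b x. a \<in> D \<Longrightarrow> b \<in> D \<Longrightarrow> strict le a x \<Longrightarrow> strict le x b \<Longrightarrow> x \<in> D"
    using cv unfolding convex_set_def by blast
  obtain M0 N0 where uw: "strict le u w" using crossingE[OF c] by metis
  have w0: "strict le 0 w" using le_lt_trans[OF u0 uw] .
  have uD: "u \<in> D"
  proof (cases "u = 0")
    case True then show ?thesis using D0 by simp
  next
    case False
    then have "strict le 0 u" using u0 by (simp add: strict_def)
    then show ?thesis using Dcv[OF D0 hD] lt_trans[OF uw wh] by blast
  qed
  have wD: "w \<in> D" using Dcv[OF D0 hD w0 wh] .
  have "crossing le (-u + f - -u) (-u + g - -u) (-u + u) (-u + v) (-u + w)" by (rule translate[OF c])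
  then have c1: "crossing le (-u + f - -u) (-u + g - -u) 0 (-u + v) (-u + w)" by simp
  define v' where "v' = -u + v"
  define w' where "w' = -u + w"
  have w'D: "w' \<in> D" unfolding w'_def using Dadd Dneg uD wD by blast
  have w'0: "strict le 0 w'" unfolding w'_def using slinv[OF uw, of "-u"] by simp
  obtain F G where c2: "crossing le F G 0 v' w'" and fv: "strict le (F + v') w'" and wg': "strict le w' (G + 0)"
    using power[OF c1[folded v'_def w'_def]] by metis
  have wg: "strict le w' G" using wg' by simp
  have A0: "strict le 0 (F + G)" by (rule posA[OF c2 fv wg])
  have vi: "\<And>n. strict le (F + G + gpow_act G n 0) w'" using viol[OF c2] fv lt_trans by blast
  have G0: "strict le 0 G" using lt_trans[OF w'0 wg] .
  have Aw: "strict le (F + G) w'" using vi[of 0] by simp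
  have AGw: "strict le (F + G + G) w'" using vi[of 1] by simp
  have AG0: "strict le 0 (F + G + G)" using pos_add[OF A0 G0] .
  have AD: "F + G \<in> D" using Dcv[OF D0 w'D A0 Aw] .
  have AGD: "F + G + G \<in> D" using Dcv[OF D0 w'D AG0 AGw] .
  obtain n where n: "strict le (F + G + G) (F + G + gpow_act (F + G + G) n 0)"
    using cr AD AGD A0 AG0 unfolding conradian_on_def by blast
  have claim: "strict le (gpow_act (F + G + G) k 0) G" for k
  proof (induct k)
    case 0 then show ?case using G0 by simp
  next
    case (Suc k)
    have "strict le (F + G + G + gpow_act (F + G + G) k 0) (F + G + G + G)" using slinv[OF Suc] .
    moreover have "strict le (F + G + G + G) w'" using vi[of 2] by (simp add: numeral_2_eq_2 add.assoc)
    ultimately have "strict le (F + G + G + gpow_act (F + G + G) k 0) G" using wg lt_trans by blast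
    then show ?case by (simp add: add.assoc)
  qed
  have "strict le (F + G + gpow_act (F + G + G) n 0) (F + G + G)"
    using slinv[OF claim[of n], of "F + G"] .
  then show False using n lt_asym lt_le by blast
qed

end



definition splus :: "('a::group_add \<Rightarrow> 'a \<Rightarrow> bool) \<Rightarrow> 'a set" where
  "splus le = {h. strict le 0 h \<and> (\<forall>f g u v w. crossing le f g u v w \<and> le 0 u \<longrightarrow> le h w)}"
definition sminus :: "('a::group_add \<Rightarrow> 'a \<Rightarrow> bool) \<Rightarrow> 'a set" where
  "sminus le = {h. strict le h 0 \<and> (\<forall>f g u v w. crossing le f g u v w \<and> le v 0 \<longrightarrow> le w h)}"

definition rev_ord :: "('a \<Rightarrow> 'a \<Rightarrow> bool) \<Rightarrow> 'a \<Rightarrow> 'a \<Rightarrow> bool" where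
  "rev_ord le x y = le y x"

lemma rev_rev: "rev_ord (rev_ord le) = le" by (simp add: rev_ord_def fun_eq_iff)
lemma strict_rev: "strict (rev_ord le) a b = strict le b a" by (auto simp: strict_def rev_ord_def)
lemma crossing_rev1: assumes a: "crossing (rev_ord le) f g u v w" shows "crossing le g f v u w"
proof -
  obtain M N where c: "strict (rev_ord le) u w" "strict (rev_ord le) w v"
    "\<And>n. strict (rev_ord le) (gpow_act g n u) v"
    "\<And>n. strict (rev_ord le) u (gpow_act f n v)" "strict (rev_ord le) (gpow_act f N v) w"
    "strict (rev_ord le) w (gpow_act g M u)"
    by (rule crossingE[OF a]) blast
  show ?thesis by (rule crossingI[where N=M and M=N]) (use c in \<open>simp_all add: strict_rev\<close>)
qed
lemma crossing_rev2: assumes a: "crossing le g f v u w" shows "crossing (rev_ord le) f g u v w"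
proof -
  obtain M N where c: "strict le v w" "strict le w u" "\<And>n. strict le (gpow_act f n v) u"
    "\<And>n. strict le v (gpow_act g n u)" "strict le (gpow_act g N u) w" "strict le w (gpow_act f M v)"
    by (rule crossingE[OF a]) blast
  show ?thesis by (rule crossingI[where N=M and M=N]) (simp_all add: c strict_rev)
qed
lemma crossing_rev: "crossing (rev_ord le) f g u v w = crossing le g f v u w"
  using crossing_rev1 crossing_rev2 by blast
lemma sminus_rev: "sminus le = splus (rev_ord le)"
  unfolding splus_def sminus_def by (auto simp: crossing_rev strict_rev rev_ord_def)
lemma splus_rev: "splus le = sminus (rev_ord le)"
  using sminus_rev[of "rev_ord le"] by (simp add: rev_rev)
lemma lord_rev: "lord le \<Longrightarrow> lord (rev_ord le)"
  unfolding lord_def left_ordering_def rev_ord_def by blast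

context lord begin

lemma splus_pos: "h \<in> splus le \<Longrightarrow> strict le 0 h" by (simp add: splus_def)
lemma sminus_neg: "h \<in> sminus le \<Longrightarrow> strict le h 0" by (simp add: sminus_def)
lemma splusD: "h \<in> splus le \<Longrightarrow> crossing le f g u v w \<Longrightarrow> le 0 u \<Longrightarrow> le h w" by (simp add: splus_def)
lemma sminusD: "h \<in> sminus le \<Longrightarrow> crossing le f g u v w \<Longrightarrow> le v 0 \<Longrightarrow> le w h" by (simp add: sminus_def)

lemma sum: assumes h1: "h1 \<in> splus le" and h2: "h2 \<in> splus le" shows "h1 + h2 \<in> splus le"
proof -
  have "le (h1 + h2) w" if c: "crossing le f g u v w" and u0: "le 0 u" for f g u v w
  proof (rule ccontr)
    assume "\<not> ?thesis"
    then have wh: "strict le w (h1 + h2)" using lt_iff by blast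
    obtain M N where fN: "strict le (gpow_act f N v) w" using crossingE[OF c] by metis
    have h1f: "le h1 (gpow_act f n v)" if "N \<le> n" for n
      using splusD[OF h1 lower_w[OF c fN that] u0] .
    have d: "strict le (f + v) v" by (rule cr_f_down[OF c])
    have h1fs: "strict le h1 (gpow_act f n v)" for n
      using le_lt_trans[OF h1f[of "n+N+1"] decr[OF d, of n "n+N+1"]] by simp
    have h1w: "strict le h1 w" using le_lt_trans[OF h1f[of N] fN] by simp
    define x where "x = (if le u h1 then h1 else u)"
    have cx: "crossing le f g x v w"
      using raise_u[OF c _ h1w h1fs] c unfolding x_def by auto
    have h1x: "le h1 x" unfolding x_def using refl total by auto
    have "crossing le (-h1 + f - -h1) (-h1 + g - -h1) (-h1 + x) (-h1 + v) (-h1 + w)"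
      by (rule translate[OF cx])
    moreover have "le 0 (-h1 + x)" using linv[OF h1x, of "-h1"] by simp
    ultimately have "le h2 (-h1 + w)" using splusD[OF h2] by blast
    moreover have "strict le (-h1 + w) h2" using slinv[OF wh, of "-h1"] by (simp add: add.assoc[symmetric])
    ultimately show False using lt_asym by blast
  qed
  then show ?thesis using pos_add[OF splus_pos[OF h1] splus_pos[OF h2]] unfolding splus_def by blast
qed

lemma negI: assumes h: "h \<in> sminus le" shows "- h \<in> splus le"
proof -
  have key: "le (-h) w" if c: "crossing le f g u v w" and u0: "le 0 u" for f g u v w
  proof (rule ccontr)
    assume "\<not> ?thesis"
    then have wh: "strict le w (-h)" using lt_iff by blast
    obtain M0 N0 where uw: "strict le u w" using crossingE[OF c] by metis
    have "crossing le (-u + f - -u) (-u + g - -u) (-u + u) (-u + v) (-u + w)" by (rule translate[OF c])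
    then have c1: "crossing le (-u + f - -u) (-u + g - -u) 0 (-u + v) (-u + w)" by simp
    define v' where "v' = -u + v"
    define w' where "w' = -u + w"
    have w'0: "strict le 0 w'" unfolding w'_def using slinv[OF uw, of "-u"] by simp
    obtain F G where c2: "crossing le F G 0 v' w'" and fv: "strict le (F + v') w'" and wg': "strict le w' (G + 0)"
      using power[OF c1[folded v'_def w'_def]] by metis
    have wg: "strict le w' G" using wg' by simp
    have A0: "strict le 0 (F + G)" by (rule posA[OF c2 fv wg])
    have G0: "strict le 0 G" using lt_trans[OF w'0 wg] .
    have vi: "\<And>n. strict le (F + G + gpow_act G n 0) w'" using viol[OF c2] fv lt_trans by blast
    have ab: "\<And>n. strict le (F + G + gpow_act G n 0) G" using vi wg lt_trans by blast
    have nc: "crossing le (F + G) (F + G + G - (F + G)) (F + G) G (F + G + G)"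
      by (rule pair[OF A0 G0 ab])
    have orb: "gpow_act (F + G + G - (F + G)) n (F + G) = F + G + gpow_act G n 0" for n
      using gpow_conj[of "F + G" G n 0] by simp
    define y0 where "y0 = -u + -h"
    have w'y: "strict le w' y0" unfolding w'_def y0_def using slinv[OF wh, of "-u"] .
    define vs where "vs = (if le G y0 then G else y0)"
    have cs: "crossing le (F + G) (F + G + G - (F + G)) (F + G) vs (F + G + G)"
    proof (cases "le G y0")
      case True then show ?thesis using nc unfolding vs_def by simp
    next
      case False
      have "strict le (F + G + G) w'" using vi[of 1] by simp
      then have wy: "strict le (F + G + G) y0" using w'y lt_trans by blast
      have yv: "le y0 G" using False total by blast
      have yg: "\<And>n. strict le (gpow_act (F + G + G - (F + G)) n (F + G)) y0"
        unfolding orb using vi w'y lt_trans by blast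
      show ?thesis using lower_v[OF nc wy yv yg] False unfolding vs_def by simp
    qed
    have vsy: "le vs y0" unfolding vs_def using refl by auto
    have ct: "crossing le (h + u + (F + G) - (h + u)) (h + u + (F + G + G - (F + G)) - (h + u))
       (h + u + (F + G)) (h + u + vs) (h + u + (F + G + G))"
      by (rule translate[OF cs])
    have "le (h + u + vs) (h + u + y0)" using linv[OF vsy] .
    moreover have "h + u + y0 = 0" unfolding y0_def by (simp only: add.assoc add_minus_cancel right_minus)
    ultimately have "le (h + u + vs) 0" by simp
    then have "le (h + u + (F + G + G)) h" using sminusD[OF h ct] by blast
    then have "le (-h + (h + u + (F + G + G))) (-h + h)" using linv by blast
    then have X: "le (u + (F + G + G)) 0" by (simp add: add.assoc)
    have "strict le (u + 0) (u + (F + G + G))" using slinv pos_add[OF A0 G0] by blast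
    then have "strict le u (u + (F + G + G))" by simp
    then have "strict le 0 (u + (F + G + G))" using le_lt_trans[OF u0] by blast
    then show False using X lt_asym by blast
  qed
  have pos: "strict le 0 (-h)" using sminus_neg[OF h] neg_pos by simp
  show ?thesis unfolding splus_def mem_Collect_eq
  proof (intro conjI allI impI)
    show "strict le 0 (-h)" by (rule pos)
    fix f g u v w assume "crossing le f g u v w \<and> le 0 u"
    then show "le (-h) w" using key by blast
  qed
qed

lemma negII: assumes h: "h \<in> splus le" shows "- h \<in> sminus le"
proof -
  interpret r: lord "rev_ord le" by (rule lord_rev) (rule lord_axioms)
  have "h \<in> sminus (rev_ord le)" using h by (simp add: splus_rev[of le])
  then have "-h \<in> splus (rev_ord le)" by (rule r.negI)
  then show ?thesis by (simp add: sminus_rev[of le])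
qed

end



definition sset :: "('a::group_add \<Rightarrow> 'a \<Rightarrow> bool) \<Rightarrow> 'a set" where
  "sset le = {0} \<union> splus le \<union> sminus le"

context lord begin

lemma splus_down: assumes t: "t \<in> splus le" and z: "strict le 0 z" and zt: "le z t" shows "z \<in> splus le"
proof -
  have "le z w" if "crossing le f g u v w" "le 0 u" for f g u v w
    using splusD[OF t that] zt trans by blast
  then show ?thesis unfolding splus_def using z by blast
qed

lemma sminus_up: assumes s: "s \<in> sminus le" and z: "strict le z 0" and sz: "le s z" shows "z \<in> sminus le"
proof -
  have "le w z" if "crossing le f g u v w" "le v 0" for f g u v w
    using sminusD[OF s that] sz trans by blast
  then show ?thesis unfolding sminus_def using z by blast
qed

lemma pos_in: "x \<in> sset le \<Longrightarrow> strict le 0 x \<Longrightarrow> x \<in> splus le"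
  unfolding sset_def using sminus_neg lt_asym lt_le lt_irrefl by blast
lemma neg_in: "x \<in> sset le \<Longrightarrow> strict le x 0 \<Longrightarrow> x \<in> sminus le"
  unfolding sset_def using splus_pos lt_asym lt_le lt_irrefl by blast

lemma S_between: assumes s: "s \<in> sset le" and t: "t \<in> sset le" and sz: "le s z" and zt: "le z t"
  shows "z \<in> sset le"
proof -
  consider "z = 0" | "strict le 0 z" | "strict le z 0" using cases3 by blast
  then show ?thesis
  proof cases
    case 1 then show ?thesis unfolding sset_def by simp
  next
    case 2
    then have "strict le 0 t" using lt_le_trans zt by blast
    then have "t \<in> splus le" using pos_in t by blast
    then show ?thesis using splus_down 2 zt unfolding sset_def by blast
  next
    case 3
    then have "strict le s 0" using le_lt_trans sz by blast
    then have "s \<in> sminus le" using neg_in s by blast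
    then show ?thesis using sminus_up 3 sz unfolding sset_def by blast
  qed
qed

lemma S_neg: "x \<in> sset le \<Longrightarrow> - x \<in> sset le"
  unfolding sset_def using negI negII by auto

lemma S_add: assumes x: "x \<in> sset le" and y: "y \<in> sset le" shows "x + y \<in> sset le"
proof -
  have S0: "0 \<in> sset le" unfolding sset_def by simp
  consider "x = 0" | "y = 0" | "x \<in> splus le" "y \<in> splus le" | "x \<in> sminus le" "y \<in> sminus le"
    | "x \<in> splus le" "y \<in> sminus le" | "x \<in> sminus le" "y \<in> splus le"
    using x y unfolding sset_def by blast
  then show ?thesis
  proof cases
    case 1 then show ?thesis using y by simp
  next
    case 2 then show ?thesis using x by simp
  next
    case 3 then show ?thesis using sum unfolding sset_def by blast
  next
    case 4
    then have "-y + -x \<in> splus le" using sum negI by blast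
    then have "- (-y + -x) \<in> sminus le" by (rule negII)
    then show ?thesis unfolding sset_def by (simp add: minus_add)
  next
    case 5
    have xs: "x \<in> sset le" and ys: "-y \<in> sset le" using 5 negI unfolding sset_def by auto
    have "strict le (x + y) (x + 0)" using slinv sminus_neg[OF 5(2)] by blast
    then have xy: "strict le (x + y) x" by simp
    show ?thesis
    proof (cases "le 0 (x + y)")
      case True then show ?thesis using S_between[OF S0 xs True] xy lt_le by blast
    next
      case False
      then have "strict le (x + y) 0" using lt_iff by blast
      then have a: "le 0 (- (x + y))" using neg_pos lt_le by blast
      have "strict le (-y + -x) (-y + 0)" using slinv splus_pos[OF 5(1)] pos_neg by blast
      then have b: "le (- (x + y)) (-y)" using lt_le by (simp add: minus_add)
      have "- (x + y) \<in> sset le" using S_between[OF S0 ys a b] .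
      then have "- (- (x + y)) \<in> sset le" by (rule S_neg)
      then show ?thesis by simp
    qed
  next
    case 6
    have xs: "x \<in> sset le" and ys: "-y \<in> sset le" using 6 negII unfolding sset_def by auto
    have "strict le (x + 0) (x + y)" using slinv splus_pos[OF 6(2)] by blast
    then have xy: "strict le x (x + y)" by simp
    show ?thesis
    proof (cases "le (x + y) 0")
      case True then show ?thesis using S_between[OF xs S0 _ True] xy lt_le by blast
    next
      case False
      then have "strict le 0 (x + y)" using lt_iff by blast
      then have a: "le (- (x + y)) 0" using pos_neg lt_le by blast
      have "strict le (-y + 0) (-y + -x)" using slinv sminus_neg[OF 6(1)] neg_pos by blast
      then have b: "le (-y) (- (x + y))" using lt_le by (simp add: minus_add)
      have "- (x + y) \<in> sset le" using S_between[OF ys S0 b a] .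
      then have "- (- (x + y)) \<in> sset le" by (rule S_neg)
      then show ?thesis by simp
    qed
  qed
qed

lemma S_sub: "subgroup_of (sset le)"
  unfolding subgroup_of_def using S_add S_neg by (auto simp: sset_def)

lemma S_convex: "convex_set le (sset le)"
  unfolding convex_set_def using S_between lt_le by blast

lemma S_conr: "conradian_on le (sset le)"
  unfolding conradian_on_def
proof (intro ballI impI)
  fix f g assume fS: "f \<in> sset le" and gS: "g \<in> sset le" and fg: "strict le 0 f \<and> strict le 0 g"
  then have f0: "strict le 0 f" and g0: "strict le 0 g" by auto
  have gp: "g \<in> splus le" using pos_in gS g0 by blast
  show "\<exists>n. strict le g (f + gpow_act g n 0)"
  proof (rule ccontr)
    assume "\<not> ?thesis"
    then have nle: "le (f + gpow_act g n 0) g" for n using lt_iff by blast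
    have st: "strict le (f + gpow_act g n 0) g" for n
    proof -
      have "f + gpow_act g n 0 \<noteq> g"
      proof
        assume e: "f + gpow_act g n 0 = g"
        have "gpow_act g (Suc n) 0 = gpow_act g n 0 + g"
          using gpow_Suc_right[of g n 0] gpow_add0[of g n g] by simp
        then have "f + gpow_act g (Suc n) 0 = g + g" using e by (simp add: add.assoc[symmetric])
        then have "le (g + g) g" using nle[of "Suc n"] by simp
        moreover have "strict le (g + 0) (g + g)" using slinv[OF g0] .
        ultimately show False using lt_asym by simp
      qed
      then show ?thesis using nle[of n] unfolding strict_def by blast
    qed
    have c: "crossing le f (f + g - f) f g (f + g)" by (rule pair[OF f0 g0 st])
    have "le g (f + g)" using splusD[OF gp c] lt_le[OF f0] by blast
    moreover have "strict le (f + g) g" using st[of 1] by simp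
    ultimately show False using lt_asym by blast
  qed
qed

lemma D_sub_S: assumes sub: "subgroup_of D" and cv: "convex_set le D" and cr: "conradian_on le D"
  shows "D \<subseteq> sset le"
proof
  fix x assume xD: "x \<in> D"
  have pos: "y \<in> splus le" if yD: "y \<in> D" and y0: "strict le 0 y" for y
  proof -
    have "le y w" if "crossing le f g u v w" "le 0 u" for f g u v w
    proof (rule ccontr)
      assume "\<not> le y w"
      then have "strict le w y" using lt_iff by blast
      then show False using conr_nocross[OF sub cv cr yD that] by blast
    qed
    then show ?thesis unfolding splus_def using y0 by blast
  qed
  consider "x = 0" | "strict le 0 x" | "strict le x 0" using cases3 by blast
  then show "x \<in> sset le"
  proof cases
    case 1 then show ?thesis unfolding sset_def by simp
  next
    case 2 then show ?thesis using pos[OF xD] unfolding sset_def by blast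
  next
    case 3
    have "-x \<in> D" using sub xD unfolding subgroup_of_def by blast
    then have "-x \<in> splus le" using pos 3 neg_pos by blast
    then have "- (-x) \<in> sminus le" by (rule negII)
    then show ?thesis unfolding sset_def by simp
  qed
qed

lemma soul: "conradian_soul le = sset le"
  unfolding conradian_soul_def
proof (rule the_equality)
  show "subgroup_of (sset le) \<and> convex_set le (sset le) \<and> conradian_on le (sset le) \<and>
    (\<forall>D. subgroup_of D \<and> convex_set le D \<and> conradian_on le D \<and> sset le \<subseteq> D \<longrightarrow> D = sset le)"
    using S_sub S_convex S_conr D_sub_S by blast
next
  fix C assume "subgroup_of C \<and> convex_set le C \<and> conradian_on le C \<and>
    (\<forall>D. subgroup_of D \<and> convex_set le D \<and> conradian_on le D \<and> C \<subseteq> D \<longrightarrow> D = C)"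
  then show "C = sset le" using S_sub S_convex S_conr D_sub_S by blast
qed

end

theorem mainTheorem7:
  fixes le :: "'a::group_add \<Rightarrow> 'a \<Rightarrow> bool"
  assumes "left_ordering le"
  defines "Splus \<equiv> {h. strict le 0 h \<and>
              (\<forall>f g u v w. crossing le f g u v w \<and> le 0 u \<longrightarrow> le h w)}"
      and "Sminus \<equiv> {h. strict le h 0 \<and>
              (\<forall>f g u v w. crossing le f g u v w \<and> le v 0 \<longrightarrow> le w h)}"
  shows "conradian_soul le = {0} \<union> Splus \<union> Sminus"
proof -
  interpret lord le by (rule lord.intro) (rule assms(1))
  have "Splus = splus le" "Sminus = sminus le" unfolding Splus_def Sminus_def splus_def sminus_def by simp_all
  then show ?thesis using soul unfolding sset_def by simp
qed



end
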